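(* Let $p$ be a prime, $n\ge1$, and let $s_1,\ldots,s_{n+1}$ be integers with $0\le s_\nu<p$ for all $\nu=1,\ldots,n+1$. If \[ \sum_{\nu=1}^n s_\nu\,\varphi(p^{\nu-1})=s_{n+1}\,p^{n-1}, \] then $s_1=s_2=\cdots=s_{n+1}$.
   Context: $\varphi$ denotes Euler's totient function (so $\varphi(p^0)=1$). *)

theory Defs
  imports "HOL-Number_Theory.Number_Theory"
begin

end

theory Submission
  imports Defs
begin

lemma tot_int:
  assumes "prime p"
  shows "int (totient (p ^ Suc k)) = int p ^ k * (int p - 1)"
proof -
  have "p \<ge> 1" using assms prime_gt_0_nat by (simp add: Suc_leI)
  then show ?thesis using totient_prime_power_Suc[OF assms, of k] by (simp add: of_nat_diff)
qed

lemma totsum: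
  assumes "prime p"
  shows "(\<Sum>\<nu>=1..Suc k. int (totient (p ^ (\<nu> - 1)))) = int p ^ k"
proof (induction k)
  case 0
  then show ?case by simp
next
  case (Suc k)
  have "(\<Sum>\<nu>=1..Suc (Suc k). int (totient (p ^ (\<nu> - 1))))
      = int p ^ k + int p ^ k * (int p - 1)"
    using Suc tot_int[OF assms, of k] by (simp add: sum.cl_ivl_Suc)
  also have "\<dots> = int p ^ Suc k" by (simp add: algebra_simps)
  finally show ?case .
qed

lemma main:
  fixes p :: nat and s :: "nat \<Rightarrow> int"
  assumes p: "prime p"
  shows "(\<forall>\<nu>\<in>{1..Suc k}. 0 \<le> s \<nu> \<and> s \<nu> < int p) \<Longrightarrow> 0 \<le> c \<Longrightarrow> c < int p \<Longrightarrow>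
    (\<Sum>\<nu>=1..Suc k. s \<nu> * int (totient (p ^ (\<nu> - 1)))) = c * int p ^ k \<Longrightarrow>
    \<forall>\<nu>\<in>{1..Suc k}. s \<nu> = c"
proof (induction k arbitrary: c)
  case 0
  then show ?case by simp
next
  case (Suc k)
  define A where "A = (\<Sum>\<nu>=1..Suc k. s \<nu> * int (totient (p ^ (\<nu> - 1))))"
  define t where "t = s (Suc (Suc k))"
  have pg: "int p \<ge> 2" using p prime_ge_2_nat by auto
  have tb: "0 \<le> t" "t < int p" using Suc.prems(1) unfolding t_def by auto
  have eq: "A + t * (int p ^ k * (int p - 1)) = c * int p ^ Suc k"
    using Suc.prems(4) tot_int[OF p, of k] unfolding A_def t_def by (simp add: sum.cl_ivl_Suc)
  define d where "d = int p * (c - t) + t"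
  have Ad: "A = d * int p ^ k" using eq unfolding d_def by (simp add: algebra_simps)
  have A0: "A \<ge> 0" unfolding A_def
    using Suc.prems(1) by (intro sum_nonneg) auto
  have "A \<le> (\<Sum>\<nu>=1..Suc k. (int p - 1) * int (totient (p ^ (\<nu> - 1))))"
    unfolding A_def using Suc.prems(1) by (intro sum_mono mult_right_mono) auto
  also have "\<dots> = (int p - 1) * int p ^ k" by (simp only: sum_distrib_left[symmetric] totsum[OF p])
  finally have A1: "A \<le> (int p - 1) * int p ^ k" .
  have ppos: "int p ^ k > 0" using pg by simp
  have d0: "d \<ge> 0" using A0 Ad ppos by (simp add: zero_le_mult_iff)
  have d1: "d \<le> int p - 1" using A1 Ad ppos by (meson mult_right_le_imp_le)
  have "c = t"
  proof (rule ccontr)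
    assume "c \<noteq> t"
    then have "c - t \<ge> 1 \<or> c - t \<le> -1" by linarith
    then show False
    proof
      assume h: "c - t \<ge> 1"
      have "int p * (c - t) \<ge> int p" using h pg by simp
      then show False using d1 tb unfolding d_def by linarith
    next
      assume h: "c - t \<le> -1"
      have "int p * (c - t) \<le> - int p" using h pg
        by (metis mult.right_neutral mult_left_mono mult_minus_right of_nat_0_le_iff)
      then show False using d0 tb unfolding d_def by linarith
    qed
  qed
  then have dc: "d = c" unfolding d_def by simp
  have h1: "\<forall>\<nu>\<in>{1..Suc k}. 0 \<le> s \<nu> \<and> s \<nu> < int p" using Suc.prems(1) by auto
  have h2: "A = c * int p ^ k" using Ad dc by simp
  have "\<forall>\<nu>\<in>{1..Suc k}. s \<nu> = c"
    by (rule Suc.IH[OF h1 Suc.prems(2) Suc.prems(3) h2[unfolded A_def]])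
  then show ?case using \<open>c = t\<close> t_def by (auto simp: le_Suc_eq)
qed

theorem lemma3p4:
  fixes p n :: nat and s :: "nat \<Rightarrow> int"
  assumes "prime p" and "n \<ge> 1"
    and "\<And>\<nu>. \<nu> \<in> {1..n+1} \<Longrightarrow> 0 \<le> s \<nu> \<and> s \<nu> < int p"
    and "(\<Sum>\<nu>=1..n. s \<nu> * int (totient (p ^ (\<nu> - 1)))) = s (n+1) * int p ^ (n - 1)"
  shows "\<forall>\<nu>\<in>{1..n+1}. s \<nu> = s 1"
proof -
  obtain k where k: "n = Suc k" using assms(2) by (cases n) auto
  have b: "\<forall>\<nu>\<in>{1..Suc k}. 0 \<le> s \<nu> \<and> s \<nu> < int p" using assms(3) k by auto
  have c0: "0 \<le> s (n+1)" "s (n+1) < int p" using assms(3) by auto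
  have e: "(\<Sum>\<nu>=1..Suc k. s \<nu> * int (totient (p ^ (\<nu> - 1)))) = s (n+1) * int p ^ k"
    using assms(4) k by simp
  have "\<forall>\<nu>\<in>{1..Suc k}. s \<nu> = s (n+1)"
    by (rule main[OF assms(1) b c0 e])
  then have all: "\<forall>\<nu>\<in>{1..n+1}. s \<nu> = s (n+1)" using k by (auto simp: le_Suc_eq)
  have h1: "s 1 = s (n+1)" using bspec[OF all, of 1] by simp
  show ?thesis
  proof (intro ballI)
    fix \<nu> assume "\<nu> \<in> {1..n+1}"
    then have "s \<nu> = s (n+1)" using all by blast
    then show "s \<nu> = s 1" using h1 by linarith
  qed
qed

end
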